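(* In the setting of the structural VAR $A(L)w_t = \epsilon_t$, $A(L)=A_0+A_1L+\cdots+A_pL^p$ with $A_0$ nonsingular, partition $w_t' = (y_t', x_t')$ with $y_t$ of dimension $G$ and $x_t$ of dimension $K$, $G+K=m$, and partition conformably $A(L) = \begin{bmatrix} A_{11}(L) & A_{12}(L)\\ A_{21}(L) & A_{22}(L)\end{bmatrix}$ and $\epsilon_t' = (\epsilon_{1t}', \epsilon_{2t}')$. Suppose the prior restrictions $A_{21}(L)\equiv 0$ and $E(\epsilon_{1t}\epsilon_{2t}')=0$ hold, and that for some $g\le G$ the $g$-th row $a_g'$ of $A=[A_0,\dots,A_p]$ satisfies $a_g'\Phi_g = 0'$ for a known $(p+1)m\times R_g$ matrix $\Phi_g$. Then the $g$-th equation is identified if and only if $$\operatorname{rank}\big[(A_{11}\ \ A_{12})\Phi_g\big] = G-1,$$ where $(A_{11}\ \ A_{12})$ denotes the $G\times(p+1)m$ matrix consisting of the first $G$ rows of $A=[A_0,A_1,\dots,A_p]$.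
   Context: Two structures $A$ and $FA$ (with $F$ a nonsingular $m\times m$ matrix and errors $F\epsilon_t$) generate the same reduced form and are observationally equivalent. A nonsingular $F$ is admissible if $FA$ and $F\epsilon_t$ satisfy the same prior restrictions as $A$ and $\epsilon_t$ (here including $A_{21}(L)\equiv 0$, the zero block covariance, and for each equation its own linear restrictions). The $g$-th equation is identified if and only if for every admissible $F$ the $g$-th row of $F$ has the form $(0,\dots,0,f_{gg},0,\dots,0)$ with $f_{gg}\ne 0$. *)

theory Defs
  imports "Jordan_Normal_Form.DL_Rank"
begin

text \<open>Structural VAR  A(L) w_t = eps_t,  A = [A_0, A_1, ..., A_p] is an m x (p+1)m real
matrix; column j of A belongs to lag j div m and to variable j mod m.  Indices are 0-based:
variables 0..G-1 form y_t, variables G..m-1 form x_t.\<close>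

text \<open>Prior restriction A_21(L) = 0: rows G..m-1 vanish in the y-columns of every lag.\<close>
definition zero_A21 :: "nat \<Rightarrow> nat \<Rightarrow> nat \<Rightarrow> real mat \<Rightarrow> bool" where
  "zero_A21 G m p A \<longleftrightarrow>
     (\<forall>i j. G \<le> i \<and> i < m \<and> j < Suc p * m \<and> j mod m < G \<longrightarrow> A $$ (i, j) = 0)"

text \<open>Prior restriction E(eps_1t eps_2t') = 0 (zero off-diagonal covariance blocks).\<close>
definition zero_cov_block :: "nat \<Rightarrow> nat \<Rightarrow> real mat \<Rightarrow> bool" where
  "zero_cov_block G m S \<longleftrightarrow>
     (\<forall>i j. i < G \<and> G \<le> j \<and> j < m \<longrightarrow> S $$ (i, j) = 0 \<and> S $$ (j, i) = 0)"

definition eq_restrictions :: "nat \<Rightarrow> (nat \<Rightarrow> real mat) \<Rightarrow> real mat \<Rightarrow> bool" where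
  "eq_restrictions m Phi A \<longleftrightarrow>
     (\<forall>i<m. transpose_mat (Phi i) *\<^sub>v row A i = 0\<^sub>v (dim_col (Phi i)))"

text \<open>F is admissible: nonsingular, and F A together with the errors F eps_t
(covariance F Sigma F') satisfy the same prior restrictions.\<close>
definition admissible ::
  "nat \<Rightarrow> nat \<Rightarrow> nat \<Rightarrow> real mat \<Rightarrow> real mat \<Rightarrow> (nat \<Rightarrow> real mat) \<Rightarrow> real mat \<Rightarrow> bool" where
  "admissible G m p A Sig Phi F \<longleftrightarrow>
     F \<in> carrier_mat m m \<and> invertible_mat F \<and>
     zero_A21 G m p (F * A) \<and>
     zero_cov_block G m (F * Sig * transpose_mat F) \<and>
     eq_restrictions m Phi (F * A)"

definition identified ::
  "nat \<Rightarrow> nat \<Rightarrow> nat \<Rightarrow> real mat \<Rightarrow> real mat \<Rightarrow> (nat \<Rightarrow> real mat) \<Rightarrow> nat \<Rightarrow> bool" where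
  "identified G m p A Sig Phi g \<longleftrightarrow>
     (\<forall>F. admissible G m p A Sig Phi F \<longrightarrow>
          (\<forall>j<m. j \<noteq> g \<longrightarrow> F $$ (g, j) = 0) \<and> F $$ (g, g) \<noteq> 0)"

end

theory Submission
  imports Defs
begin

lemma L_sq:
  fixes Q :: "'a::field mat"
  assumes Q: "Q \<in> carrier_mat n n" and v: "v \<in> carrier_vec n" "v \<noteq> 0\<^sub>v n" "Q *\<^sub>v v = 0\<^sub>v n"
  shows "\<exists>u \<in> carrier_vec n. u \<noteq> 0\<^sub>v n \<and> transpose_mat Q *\<^sub>v u = 0\<^sub>v n"
proof -
  have "det Q = 0" using det_0_iff_vec_prod_zero_field[OF Q] v by blast
  hence "det (transpose_mat Q) = 0" using det_transpose[OF Q] by simp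
  thus ?thesis using det_0_iff_vec_prod_zero_field[of "transpose_mat Q" n] Q by auto
qed

lemma (in vec_space) orth_sub:
  assumes y: "y \<in> carrier_vec n"
  shows "submodule class_ring {v \<in> carrier_vec n. v \<bullet> y = 0} V"
  unfolding submodule_def
  using y apply (auto simp: module_axioms add_scalar_prod_distrib smult_scalar_prod_distrib)
  done

lemma (in vec_space) star:
  fixes M :: "'a mat"
  assumes M: "M \<in> carrier_mat n r" and g: "g < n" and rowg: "\<forall>j<r. M $$ (g,j) = 0"
  shows "rank M = n - 1 \<longleftrightarrow>
    (\<forall>x\<in>carrier_vec n. transpose_mat M *\<^sub>v x = 0\<^sub>v r \<longrightarrow> (\<forall>j<n. j \<noteq> g \<longrightarrow> x $ j = 0))"
proof -
  define E :: "'a vec" where "E = unit_vec n g"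
  have E: "E \<in> carrier_vec n" by (simp add: E_def)
  obtain S where S: "maximal S (\<lambda>T. T \<subseteq> set (cols M) \<and> lin_indpt T)"
    using maximal_exists[of "(\<lambda>T. T \<subseteq> set (cols M) \<and> lin_indpt T)" "card (set (cols M))" "{}"]
    by (meson List.finite_set card_mono empty_iff empty_subsetI finite_lin_indpt2 rev_finite_subset)
  have rk: "rank M = card S" using rank_card_indpt[OF M S] .
  have Ssub: "S \<subseteq> set (cols M)" and Sli: "lin_indpt S" using S unfolding maximal_def by auto
  have colsC: "set (cols M) \<subseteq> carrier_vec n" using M cols_dim by blast
  have SC: "S \<subseteq> carrier_vec n" using Ssub colsC by auto
  have finS: "finite S" using Ssub finite_subset by auto
  have colsE: "\<exists>k<r. c = col M k" if "c \<in> set (cols M)" for c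
    using that M by (metis carrier_matD(2) cols_length cols_nth in_set_conv_nth)
  have colsW: "c \<bullet> E = 0" if c: "c \<in> set (cols M)" for c
  proof -
    obtain k where k: "k < r" "c = col M k" using colsE[OF c] by blast
    have "c \<bullet> E = c $ g" unfolding E_def using g by simp
    also have "\<dots> = M $$ (g, k)" using k g M by auto
    finally show ?thesis using rowg k by simp
  qed
  have spanW: "span S \<subseteq> {v \<in> carrier_vec n. v \<bullet> E = 0}"
    by (rule span_is_subset, insert Ssub colsW SC, blast, rule orth_sub[OF E])
  have EE: "E \<bullet> E = 1" unfolding E_def using g by simp
  have Enot: "E \<notin> span S" using spanW EE by auto
  have ES: "E \<notin> S" using in_own_span[OF SC] Enot by auto
  have li2: "lin_indpt (S \<union> {E})" using lin_dep_iff_in_span[OF SC Sli E ES] Enot by auto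
  have "card (S \<union> {E}) \<le> n" using li_le_dim(2)[OF fin_dim _ li2] dim_is_n SC E by auto
  hence cardS: "card S \<le> n - 1" using ES finS by auto
  have colsspan: "set (cols M) \<subseteq> span S"
  proof
    fix c assume c: "c \<in> set (cols M)"
    show "c \<in> span S"
    proof (cases "c \<in> S")
      case True thus ?thesis using in_own_span[OF SC] by auto
    next
      case False
      have "lin_dep (S \<union> {c})"
      proof (rule ccontr)
        assume "\<not> lin_dep (S \<union> {c})"
        hence "S \<union> {c} \<subseteq> set (cols M) \<and> lin_indpt (S \<union> {c})" using c Ssub by auto
        moreover have "S \<subseteq> S \<union> {c}" by auto
        ultimately have "S = S \<union> {c}" using S unfolding maximal_def by blast
        thus False using False by auto
      qed
      thus ?thesis using lin_dep_iff_in_span[OF SC Sli _ False] c colsC by auto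
    qed
  qed
  obtain us where us: "set us = S" "distinct us" using finite_distinct_list[OF finS] by blast
  have lenus: "length us = card S" using us distinct_card by force
  have usC: "set us \<subseteq> carrier_vec n" using us SC by auto
  show ?thesis
  proof
    assume rkM: "rank M = n - 1"
    show "\<forall>x\<in>carrier_vec n. transpose_mat M *\<^sub>v x = 0\<^sub>v r \<longrightarrow> (\<forall>j<n. j \<noteq> g \<longrightarrow> x $ j = 0)"
    proof (intro ballI impI allI)
      fix x j assume x: "x \<in> carrier_vec n" and kx: "transpose_mat M *\<^sub>v x = 0\<^sub>v r"
        and j: "j < n" "j \<noteq> g"
      show "x $ j = 0"
      proof (rule ccontr)
        assume xj: "x $ j \<noteq> 0"
        define x' where "x' = vec n (\<lambda>i. if i = g then 0 else x $ i)"
        have x'C: "x' \<in> carrier_vec n" by (simp add: x'_def)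
        have x'nz: "x' \<noteq> 0\<^sub>v n"
        proof
          assume "x' = 0\<^sub>v n"
          hence "x' $ j = 0" using j by simp
          thus False using xj j unfolding x'_def by simp
        qed
        have ortho: "c \<bullet> x' = 0" if c: "c \<in> set (cols M)" for c
        proof -
          obtain k where k: "k < r" "c = col M k" using colsE[OF c] by blast
          have cC: "c \<in> carrier_vec n" using c colsC by auto
          have "c \<bullet> x' = c \<bullet> x"
            unfolding scalar_prod_def
          proof (rule sum.cong)
            fix i assume "i \<in> {0..<dim_vec x}"
            hence i: "i < n" using x by auto
            show "c $ i * x' $ i = c $ i * x $ i"
            proof (cases "i = g")
              case True
              have "c $ g = 0" using colsW[OF c] unfolding E_def using g by simp
              thus ?thesis using True by simp
            qed (insert i, simp add: x'_def)
          qed (insert x x'C, auto)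
          also have "c \<bullet> x = (transpose_mat M *\<^sub>v x) $ k" using k M by auto
          also have "\<dots> = 0" using kx k by simp
          finally show ?thesis .
        qed
        define Q where "Q = mat_of_cols n (E # us)"
        have lenQ: "length (E # us) = n" using lenus rkM rk g by simp
        have QC: "Q \<in> carrier_mat n n"
        proof -
          have "Q \<in> carrier_mat n (length (E # us))" unfolding Q_def by (rule mat_of_cols_carrier(1))
          thus ?thesis by (simp only: lenQ)
        qed
        have LC1: "set (E # us) \<subseteq> carrier_vec n" using usC E by auto
        have colQ: "col Q i = (E # us) ! i" if "i < n" for i
        proof -
          have il: "i < length (E # us)" using that lenQ by simp
          hence "(E # us) ! i \<in> carrier_vec n" using LC1 nth_mem by blast
          thus ?thesis unfolding Q_def using col_mat_of_cols[OF il] by blast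
        qed
        have "transpose_mat Q *\<^sub>v x' = 0\<^sub>v n"
        proof (rule eq_vecI)
          fix i assume "i < dim_vec (0\<^sub>v n :: 'a vec)"
          hence i: "i < n" by simp
          have "(transpose_mat Q *\<^sub>v x') $ i = col Q i \<bullet> x'" using i QC by auto
          also have "\<dots> = 0"
          proof (cases i)
            case 0
            have "E \<bullet> x' = x' $ g" unfolding E_def using g x'C by simp
            thus ?thesis using colQ[OF i] 0 by (simp add: x'_def g)
          next
            case (Suc k)
            have "us ! k \<in> S" using us lenQ i Suc by auto
            thus ?thesis using colQ[OF i] Suc ortho Ssub by auto
          qed
          finally show "(transpose_mat Q *\<^sub>v x') $ i = 0\<^sub>v n $ i" using i by simp
        qed (insert QC, auto)
        then obtain v where v: "v \<in> carrier_vec n" "v \<noteq> 0\<^sub>v n" "Q *\<^sub>v v = 0\<^sub>v n"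
          using L_sq[of "transpose_mat Q" n x'] QC x'C x'nz by auto
        have cQ: "cols Q = E # us" unfolding Q_def using usC E by simp
        have dQ: "distinct (cols Q)" unfolding cQ using us ES by auto
        have "lin_dep (set (cols Q))" using lin_depI[OF QC v dQ] .
        moreover have "set (cols Q) = S \<union> {E}" unfolding cQ using us by auto
        ultimately show False using li2 by simp
      qed
    qed
  next
    assume K: "\<forall>x\<in>carrier_vec n. transpose_mat M *\<^sub>v x = 0\<^sub>v r \<longrightarrow> (\<forall>j<n. j \<noteq> g \<longrightarrow> x $ j = 0)"
    show "rank M = n - 1"
    proof (rule ccontr)
      assume "rank M \<noteq> n - 1"
      hence lt: "card S < n - 1" using rk cardS by auto
      define zs where "zs = replicate (n - 1 - card S) (0\<^sub>v n :: 'a vec)"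
      define L where "L = E # us @ zs"
      define Q where "Q = mat_of_cols n L"
      have lenL: "length L = n" unfolding L_def zs_def using lenus lt by simp
      have LC: "set L \<subseteq> carrier_vec n" unfolding L_def zs_def using usC E by auto
      have QC: "Q \<in> carrier_mat n n"
      proof -
        have "Q \<in> carrier_mat n (length L)" unfolding Q_def by (rule mat_of_cols_carrier(1))
        thus ?thesis by (simp only: lenL)
      qed
      have colQ: "col Q i = L ! i" if "i < n" for i
      proof -
        have il: "i < length L" using that lenL by simp
        hence "L ! i \<in> carrier_vec n" using LC nth_mem by blast
        thus ?thesis unfolding Q_def using col_mat_of_cols[OF il] by blast
      qed
      have Llast: "L ! (n - 1) = 0\<^sub>v n"
      proof -
        define d where "d = n - 2 - card S"
        have nd: "n - 1 = Suc (length us + d)" using lenus lt unfolding d_def by simp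
        have "L ! (n - 1) = zs ! d" unfolding nd L_def by (simp only: nth_Cons_Suc nth_append_length_plus)
        also have "\<dots> = 0\<^sub>v n" unfolding zs_def d_def using lt by simp
        finally show ?thesis .
      qed
      have "Q *\<^sub>v unit_vec n (n - 1) = 0\<^sub>v n"
      proof -
        have "Q *\<^sub>v unit_vec n (n - 1) = col Q (n - 1)"
          using QC g by (intro eq_vecI) (auto simp: index_row(1))
        thus ?thesis using colQ[of "n - 1"] g Llast by simp
      qed
      then obtain y where y: "y \<in> carrier_vec n" "y \<noteq> 0\<^sub>v n" "transpose_mat Q *\<^sub>v y = 0\<^sub>v n"
        using L_sq[OF QC, of "unit_vec n (n - 1)"] g by auto
      have Ly: "L ! i \<bullet> y = 0" if i: "i < n" for i
      proof -
        have "L ! i \<bullet> y = (transpose_mat Q *\<^sub>v y) $ i" using i QC colQ[OF i] by auto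
        thus ?thesis using y(3) i by simp
      qed
      have yg: "y $ g = 0" using Ly[of 0] g y(1) unfolding L_def E_def by simp
      have yS: "s \<bullet> y = 0" if s: "s \<in> S" for s
      proof -
        obtain k where k: "k < length us" "s = us ! k" using s us by (metis in_set_conv_nth)
        have "L ! Suc k = s" unfolding L_def using k by (simp add: nth_append)
        moreover have "Suc k < n" using k lenus lenL unfolding L_def by simp
        ultimately show ?thesis using Ly by metis
      qed
      have "span S \<subseteq> {v \<in> carrier_vec n. v \<bullet> y = 0}"
        by (rule span_is_subset, insert yS SC, blast, rule orth_sub[OF y(1)])
      hence cs: "c \<bullet> y = 0" if "c \<in> set (cols M)" for c using colsspan that by auto
      have "transpose_mat M *\<^sub>v y = 0\<^sub>v r"
      proof (rule eq_vecI)
        fix k assume "k < dim_vec (0\<^sub>v r :: 'a vec)"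
        hence k: "k < r" by simp
        have "col M k \<in> set (cols M)" using k M by (metis carrier_matD(2) cols_length cols_nth nth_mem)
        hence "col M k \<bullet> y = 0" by (rule cs)
        thus "(transpose_mat M *\<^sub>v y) $ k = 0\<^sub>v r $ k" using k M by auto
      qed (insert M, auto)
      hence "\<forall>j<n. j \<noteq> g \<longrightarrow> y $ j = 0" using K y(1) by auto
      hence "y = 0\<^sub>v n" using yg y(1) by (intro eq_vecI) auto
      thus False using y(2) by simp
    qed
  qed
qed


lemma inv_inj:
  fixes Q :: "'a::field mat"
  assumes inv: "invertible_mat Q" and Q: "Q \<in> carrier_mat n n" and v: "v \<in> carrier_vec n"
    and Qv: "Q *\<^sub>v v = 0\<^sub>v n"
  shows "v = 0\<^sub>v n"
proof -
  obtain B where QB: "Q * B = 1\<^sub>m n" and BQ: "B * Q = 1\<^sub>m (dim_row B)"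
    using inv Q unfolding invertible_mat_def inverts_mat_def by auto
  have rB: "dim_row B = n" using arg_cong[OF BQ, of dim_col] Q by simp
  have cB: "dim_col B = n" using arg_cong[OF QB, of dim_col] by simp
  have B: "B \<in> carrier_mat n n" using rB cB by auto
  have "v = (B * Q) *\<^sub>v v" using BQ rB v by simp
  also have "\<dots> = B *\<^sub>v (Q *\<^sub>v v)" using B Q v by (simp add: assoc_mult_mat_vec)
  also have "\<dots> = 0\<^sub>v n"
  proof (rule eq_vecI)
    fix i assume "i < dim_vec (0\<^sub>v n :: 'a vec)"
    hence i: "i < n" by simp
    have "row B i \<in> carrier_vec n" using B by (intro carrier_vecI) simp
    thus "(B *\<^sub>v (Q *\<^sub>v v)) $ i = 0\<^sub>v n $ i" using Qv B i by simp
  qed (use B in auto)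
  finally show ?thesis .
qed

lemma inv_det:
  fixes Q :: "'a::field mat"
  assumes inv: "invertible_mat Q" and Q: "Q \<in> carrier_mat n n"
  shows "det Q \<noteq> 0"
  using det_0_iff_vec_prod_zero_field[OF Q] inv_inj[OF inv Q] by blast

lemma inv_tinj:
  fixes Q :: "'a::field mat"
  assumes inv: "invertible_mat Q" and Q: "Q \<in> carrier_mat n n" and u: "u \<in> carrier_vec n"
    and Qu: "transpose_mat Q *\<^sub>v u = 0\<^sub>v n"
  shows "u = 0\<^sub>v n"
proof -
  have "det (transpose_mat Q) \<noteq> 0" using inv_det[OF inv Q] det_transpose[OF Q] by simp
  thus ?thesis using det_0_iff_vec_prod_zero_field[of "transpose_mat Q" n] Q u Qu by auto
qed

lemma mv_sum:
  fixes Q :: "'a::comm_semiring_0 mat"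
  assumes "Q \<in> carrier_mat n c" "v \<in> carrier_vec c" "a < n"
  shows "(Q *\<^sub>v v) $ a = (\<Sum>b\<in>{0..<c}. Q $$ (a,b) * v $ b)"
  using assms by (simp add: scalar_prod_def)

lemma tmv_sum:
  fixes Q :: "'a::comm_semiring_0 mat"
  assumes "Q \<in> carrier_mat n c" "v \<in> carrier_vec n" "b < c"
  shows "(transpose_mat Q *\<^sub>v v) $ b = (\<Sum>a\<in>{0..<n}. Q $$ (a,b) * v $ a)"
  using assms by (simp add: scalar_prod_def)

lemma mm_sum:
  fixes X :: "'a::comm_semiring_0 mat"
  assumes "X \<in> carrier_mat n c" "Y \<in> carrier_mat c d" "i < n" "j < d"
  shows "(X * Y) $$ (i,j) = (\<Sum>k\<in>{0..<c}. X $$ (i,k) * Y $$ (k,j))"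
  using assms by (simp add: scalar_prod_def)

lemma Fmult_left:
  fixes X :: "real mat" and wf :: "nat \<Rightarrow> real"
  assumes X: "X \<in> carrier_mat m c" and i: "i < m" and j: "j < c"
  shows "(mat m m (\<lambda>(i,k). (if i = k then 1 else 0) + (if i = g then wf k else 0)) * X) $$ (i,j)
    = X $$ (i,j) + (if i = g then (\<Sum>k\<in>{0..<m}. wf k * X $$ (k,j)) else 0)"
proof -
  let ?F = "mat m m (\<lambda>(i,k). (if i = k then 1 else 0) + (if i = g then wf k else 0)) :: real mat"
  have "(?F * X) $$ (i,j) = (\<Sum>k\<in>{0..<m}. ?F $$ (i,k) * X $$ (k,j))"
    by (rule mm_sum[OF _ X i j], simp)
  also have "\<dots> = (\<Sum>k\<in>{0..<m}. (if i = k then X $$ (k,j) else 0) + (if i = g then wf k * X $$ (k,j) else 0))"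
    using i by (intro sum.cong refl) (simp add: distrib_right)
  also have "\<dots> = X $$ (i,j) + (if i = g then (\<Sum>k\<in>{0..<m}. wf k * X $$ (k,j)) else 0)"
    using i by (simp add: sum.distrib)
  finally show ?thesis .
qed

lemma Fmult_right:
  fixes X :: "real mat" and wf :: "nat \<Rightarrow> real"
  assumes X: "X \<in> carrier_mat c m" and i: "i < c" and j: "j < m"
  shows "(X * transpose_mat (mat m m (\<lambda>(i,k). (if i = k then 1 else 0) + (if i = g then wf k else 0)))) $$ (i,j)
    = X $$ (i,j) + (if j = g then (\<Sum>k\<in>{0..<m}. X $$ (i,k) * wf k) else 0)"
proof -
  let ?F = "mat m m (\<lambda>(i,k). (if i = k then 1 else 0) + (if i = g then wf k else 0)) :: real mat"
  have "(X * transpose_mat ?F) $$ (i,j) = (\<Sum>k\<in>{0..<m}. X $$ (i,k) * transpose_mat ?F $$ (k,j))"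
    by (rule mm_sum[OF X _ i j], simp)
  also have "\<dots> = (\<Sum>k\<in>{0..<m}. (if j = k then X $$ (i,k) else 0) + (if j = g then X $$ (i,k) * wf k else 0))"
    using j by (intro sum.cong refl) (simp add: distrib_left)
  also have "\<dots> = X $$ (i,j) + (if j = g then (\<Sum>k\<in>{0..<m}. X $$ (i,k) * wf k) else 0)"
    using j by (simp add: sum.distrib)
  finally show ?thesis .
qed


lemma S1:
  fixes A F :: "real mat"
  assumes A: "A \<in> carrier_mat m (Suc p * m)"
    and invA: "invertible_mat (mat m m (\<lambda>(i, j). A $$ (i, j)))"
    and zA: "zero_A21 G m p A" and F: "F \<in> carrier_mat m m" and zFA: "zero_A21 G m p (F * A)"
    and Gm: "G \<le> m" and i: "G \<le> i" "i < m" and k: "k < G"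
  shows "F $$ (i,k) = 0"
proof -
  define u where "u = vec m (\<lambda>k. if k < G then F $$ (i,k) else 0)"
  define P where "P = mat m m (\<lambda>(a,b). if a < G then (if b < G then A $$ (a,b) else 0) else (if a = b then 1 else (0::real)))"
  define A0 where "A0 = mat m m (\<lambda>(i, j). A $$ (i, j))"
  have PC: "P \<in> carrier_mat m m" unfolding P_def by simp
  have A0C: "A0 \<in> carrier_mat m m" unfolding A0_def by simp
  have uC: "u \<in> carrier_vec m" unfolding u_def by simp
  have mN: "m \<le> Suc p * m" by simp
  have A21: "A $$ (a,b) = 0" if "G \<le> a" "a < m" "b < G" for a b
    using zA that Gm mN unfolding zero_A21_def by auto
  have FA21: "(F * A) $$ (i,b) = 0" if "b < G" for b
    using zFA that Gm mN i unfolding zero_A21_def by auto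
  have Pu: "transpose_mat P *\<^sub>v u = 0\<^sub>v m"
  proof (rule eq_vecI)
    fix b assume "b < dim_vec (0\<^sub>v m :: real vec)"
    hence b: "b < m" by simp
    have "(transpose_mat P *\<^sub>v u) $ b = (\<Sum>a\<in>{0..<m}. P $$ (a,b) * u $ a)"
      by (rule tmv_sum[OF PC uC b])
    also have "\<dots> = 0"
    proof (cases "b < G")
      case True
      have "(\<Sum>a\<in>{0..<m}. P $$ (a,b) * u $ a) = (\<Sum>a\<in>{0..<m}. F $$ (i,a) * A $$ (a,b))"
      proof (rule sum.cong[OF refl])
        fix a assume "a \<in> {0..<m}"
        hence a: "a < m" by simp
        show "P $$ (a,b) * u $ a = F $$ (i,a) * A $$ (a,b)"
          using a b True A21[of a b] unfolding P_def u_def by auto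
      qed
      also have "\<dots> = (F * A) $$ (i,b)"
        using mm_sum[OF F A i(2), of b] b mN by simp
      also have "\<dots> = 0" using FA21 True by simp
      finally show ?thesis .
    next
      case False
      show ?thesis
        by (rule sum.neutral) (use False b in \<open>auto simp: P_def u_def\<close>)
    qed
    finally show "(transpose_mat P *\<^sub>v u) $ b = 0\<^sub>v m $ b" using b by simp
  qed (use PC in auto)
  show "F $$ (i,k) = 0"
  proof (rule ccontr)
    assume nz: "F $$ (i,k) \<noteq> 0"
    have unz: "u \<noteq> 0\<^sub>v m"
    proof
      assume "u = 0\<^sub>v m"
      hence "u $ k = 0" using k Gm by simp
      thus False using nz k Gm unfolding u_def by simp
    qed
    obtain v where v: "v \<in> carrier_vec m" "v \<noteq> 0\<^sub>v m" "transpose_mat (transpose_mat P) *\<^sub>v v = 0\<^sub>v m"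
      using L_sq[of "transpose_mat P" m u] PC uC unz Pu by auto
    hence Pv: "P *\<^sub>v v = 0\<^sub>v m" by simp
    have vhi: "v $ a = 0" if a: "G \<le> a" "a < m" for a
    proof -
      have "(P *\<^sub>v v) $ a = (\<Sum>b\<in>{0..<m}. P $$ (a,b) * v $ b)" by (rule mv_sum[OF PC v(1) a(2)])
      also have "\<dots> = (\<Sum>b\<in>{0..<m}. if b = a then v $ b else 0)"
        by (rule sum.cong[OF refl]) (use a in \<open>auto simp: P_def\<close>)
      also have "\<dots> = v $ a" using a by simp
      finally show ?thesis using Pv a by simp
    qed
    have "A0 *\<^sub>v v = 0\<^sub>v m"
    proof (rule eq_vecI)
      fix a assume "a < dim_vec (0\<^sub>v m :: real vec)"
      hence a: "a < m" by simp
      have "(A0 *\<^sub>v v) $ a = (\<Sum>b\<in>{0..<m}. A0 $$ (a,b) * v $ b)" by (rule mv_sum[OF A0C v(1) a])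
      also have "\<dots> = 0"
      proof (cases "a < G")
        case True
        have "(\<Sum>b\<in>{0..<m}. A0 $$ (a,b) * v $ b) = (\<Sum>b\<in>{0..<m}. P $$ (a,b) * v $ b)"
          by (rule sum.cong[OF refl]) (use a True vhi in \<open>auto simp: P_def A0_def\<close>)
        also have "\<dots> = (P *\<^sub>v v) $ a" by (rule mv_sum[OF PC v(1) a, symmetric])
        finally show ?thesis using Pv a by simp
      next
        case False
        show ?thesis
        proof (rule sum.neutral, intro ballI)
          fix b assume "b \<in> {0..<m}"
          hence b: "b < m" by simp
          show "A0 $$ (a,b) * v $ b = 0"
          proof (cases "b < G")
            case True
            thus ?thesis using A21[of a b] False a b by (simp add: A0_def)
          next
            case False2: False
            thus ?thesis using vhi[of b] b by simp
          qed
        qed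
      qed
      finally show "(A0 *\<^sub>v v) $ a = 0\<^sub>v m $ a" using a by simp
    qed (use A0C in auto)
    hence "v = 0\<^sub>v m" using inv_inj[OF invA[folded A0_def] A0C v(1)] by simp
    thus False using v(2) by simp
  qed
qed


lemma S2:
  fixes F Sig :: "real mat"
  assumes F: "F \<in> carrier_mat m m" and invF: "invertible_mat F"
    and F21: "\<And>i k. G \<le> i \<Longrightarrow> i < m \<Longrightarrow> k < G \<Longrightarrow> F $$ (i,k) = 0"
    and Sig: "Sig \<in> carrier_mat m m"
    and pd: "\<forall>x \<in> carrier_vec m. x \<noteq> 0\<^sub>v m \<longrightarrow> x \<bullet> (Sig *\<^sub>v x) > 0"
    and zS: "zero_cov_block G m Sig"
    and zC: "zero_cov_block G m (F * Sig * transpose_mat F)"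
    and g: "g < G" and Gm: "G \<le> m" and j: "G \<le> j" "j < m"
  shows "F $$ (g,j) = 0"
proof -
  define z where "z = vec m (\<lambda>a. if G \<le> a then F $$ (g,a) else 0)"
  define t where "t = Sig *\<^sub>v z"
  define t' where "t' = vec m (\<lambda>a. if G \<le> a then t $ a else 0)"
  have zC': "z \<in> carrier_vec m" unfolding z_def by simp
  have tC: "t \<in> carrier_vec m" unfolding t_def using Sig by (intro carrier_vecI) simp
  have t'C: "t' \<in> carrier_vec m" unfolding t'_def by simp
  have FT: "transpose_mat F \<in> carrier_mat m m" using F by simp
  have SFT: "Sig * transpose_mat F \<in> carrier_mat m m" using Sig F by simp
  have S21: "Sig $$ (c,a) = 0" if "G \<le> c" "c < m" "a < G" for c a
    using zS that unfolding zero_cov_block_def by auto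
  have C: "(F *\<^sub>v t') $ l = 0" if l: "G \<le> l" "l < m" for l
  proof -
    have "(F * Sig * transpose_mat F) $$ (l,g) = 0"
      using zC l g unfolding zero_cov_block_def by auto
    moreover have "F * Sig * transpose_mat F = F * (Sig * transpose_mat F)"
      using F Sig by (simp add: assoc_mult_mat[of F m m Sig m "transpose_mat F" m])
    ultimately have "(F * (Sig * transpose_mat F)) $$ (l,g) = 0" by simp
    hence "(\<Sum>c\<in>{0..<m}. F $$ (l,c) * (Sig * transpose_mat F) $$ (c,g)) = 0"
      using mm_sum[OF F SFT l(2), of g] g Gm by simp
    moreover have "(\<Sum>c\<in>{0..<m}. F $$ (l,c) * (Sig * transpose_mat F) $$ (c,g))
       = (\<Sum>c\<in>{0..<m}. F $$ (l,c) * t' $ c)"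
    proof (rule sum.cong[OF refl])
      fix c assume "c \<in> {0..<m}"
      hence c: "c < m" by simp
      show "F $$ (l,c) * (Sig * transpose_mat F) $$ (c,g) = F $$ (l,c) * t' $ c"
      proof (cases "c < G")
        case True
        thus ?thesis using F21[OF l True] by simp
      next
        case False
        have "(Sig * transpose_mat F) $$ (c,g) = (\<Sum>a\<in>{0..<m}. Sig $$ (c,a) * transpose_mat F $$ (a,g))"
          using mm_sum[OF Sig FT c, of g] g Gm by simp
        also have "\<dots> = (\<Sum>a\<in>{0..<m}. Sig $$ (c,a) * z $ a)"
        proof (rule sum.cong[OF refl])
          fix a assume "a \<in> {0..<m}"
          hence a: "a < m" by simp
          show "Sig $$ (c,a) * transpose_mat F $$ (a,g) = Sig $$ (c,a) * z $ a"
          proof (cases "a < G")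
            case True
            thus ?thesis using S21[of c a] False c by simp
          next
            case False
            thus ?thesis using a g Gm F unfolding z_def by simp
          qed
        qed
        also have "\<dots> = t $ c" unfolding t_def using mv_sum[OF Sig zC' c] by simp
        also have "\<dots> = t' $ c" unfolding t'_def using False c by simp
        finally show ?thesis by simp
      qed
    qed
    ultimately have "(\<Sum>c\<in>{0..<m}. F $$ (l,c) * t' $ c) = 0" by simp
    thus ?thesis using mv_sum[OF F t'C l(2)] by simp
  qed
  have t'0: "t' = 0\<^sub>v m"
  proof (rule ccontr)
    assume nz: "t' \<noteq> 0\<^sub>v m"
    define Ft where "Ft = mat m m (\<lambda>(a,b). if a < G then (if a = b then 1 else 0) else F $$ (a,b))"
    have FtC: "Ft \<in> carrier_mat m m" unfolding Ft_def by simp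
    have "Ft *\<^sub>v t' = 0\<^sub>v m"
    proof (rule eq_vecI)
      fix a assume "a < dim_vec (0\<^sub>v m :: real vec)"
      hence a: "a < m" by simp
      have "(Ft *\<^sub>v t') $ a = (\<Sum>b\<in>{0..<m}. Ft $$ (a,b) * t' $ b)" by (rule mv_sum[OF FtC t'C a])
      also have "\<dots> = 0"
      proof (cases "a < G")
        case True
        have "(\<Sum>b\<in>{0..<m}. Ft $$ (a,b) * t' $ b) = (\<Sum>b\<in>{0..<m}. if b = a then t' $ b else 0)"
          by (rule sum.cong[OF refl]) (use True a in \<open>auto simp: Ft_def\<close>)
        also have "\<dots> = t' $ a" using a by simp
        also have "\<dots> = 0" using True a unfolding t'_def by simp
        finally show ?thesis .
      next
        case False
        have "(\<Sum>b\<in>{0..<m}. Ft $$ (a,b) * t' $ b) = (\<Sum>b\<in>{0..<m}. F $$ (a,b) * t' $ b)"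
          by (rule sum.cong[OF refl]) (use False a in \<open>auto simp: Ft_def\<close>)
        also have "\<dots> = (F *\<^sub>v t') $ a" by (rule mv_sum[OF F t'C a, symmetric])
        also have "\<dots> = 0" using C[of a] False a by simp
        finally show ?thesis .
      qed
      finally show "(Ft *\<^sub>v t') $ a = 0\<^sub>v m $ a" using a by simp
    qed (use FtC in auto)
    then obtain u where u: "u \<in> carrier_vec m" "u \<noteq> 0\<^sub>v m" "transpose_mat Ft *\<^sub>v u = 0\<^sub>v m"
      using L_sq[OF FtC t'C nz] by auto
    have ulo: "u $ b = 0" if b: "b < G" for b
    proof -
      have bm: "b < m" using b Gm by simp
      have "(transpose_mat Ft *\<^sub>v u) $ b = (\<Sum>a\<in>{0..<m}. Ft $$ (a,b) * u $ a)" by (rule tmv_sum[OF FtC u(1) bm])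
      also have "\<dots> = (\<Sum>a\<in>{0..<m}. if a = b then u $ a else 0)"
      proof (rule sum.cong[OF refl])
        fix a assume "a \<in> {0..<m}"
        hence a: "a < m" by simp
        show "Ft $$ (a,b) * u $ a = (if a = b then u $ a else 0)"
        proof (cases "a < G")
          case True thus ?thesis using a bm by (simp add: Ft_def)
        next
          case False thus ?thesis using a bm b F21[of a b] by (auto simp: Ft_def)
        qed
      qed
      also have "\<dots> = u $ b" using bm by simp
      finally show ?thesis using u(3) bm by simp
    qed
    have "transpose_mat F *\<^sub>v u = 0\<^sub>v m"
    proof (rule eq_vecI)
      fix b assume "b < dim_vec (0\<^sub>v m :: real vec)"
      hence b: "b < m" by simp
      have "(transpose_mat F *\<^sub>v u) $ b = (\<Sum>a\<in>{0..<m}. F $$ (a,b) * u $ a)" by (rule tmv_sum[OF F u(1) b])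
      also have "\<dots> = (\<Sum>a\<in>{0..<m}. Ft $$ (a,b) * u $ a)"
      proof (rule sum.cong[OF refl])
        fix a assume "a \<in> {0..<m}"
        hence a: "a < m" by simp
        show "F $$ (a,b) * u $ a = Ft $$ (a,b) * u $ a"
        proof (cases "a < G")
          case True thus ?thesis using a b ulo[OF True] by (simp add: Ft_def)
        next
          case False thus ?thesis using a b by (simp add: Ft_def)
        qed
      qed
      also have "\<dots> = (transpose_mat Ft *\<^sub>v u) $ b" by (rule tmv_sum[OF FtC u(1) b, symmetric])
      also have "\<dots> = 0" using u(3) b by simp
      finally show "(transpose_mat F *\<^sub>v u) $ b = 0\<^sub>v m $ b" using b by simp
    qed (use F in auto)
    hence "u = 0\<^sub>v m" using inv_tinj[OF invF F u(1)] by simp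
    thus False using u(2) by simp
  qed
  have tz: "t $ a = 0" if "G \<le> a" "a < m" for a
  proof -
    have "t' $ a = t $ a" using that unfolding t'_def by simp
    thus ?thesis using t'0 that by simp
  qed
  have "z \<bullet> (Sig *\<^sub>v z) = (\<Sum>a\<in>{0..<m}. z $ a * t $ a)"
    unfolding t_def scalar_prod_def using Sig by simp
  also have "\<dots> = 0"
  proof (rule sum.neutral, intro ballI)
    fix a assume "a \<in> {0..<m}"
    hence a: "a < m" by simp
    show "z $ a * t $ a = 0"
    proof (cases "G \<le> a")
      case True thus ?thesis using tz[OF True a] by simp
    next
      case False thus ?thesis using a unfolding z_def by simp
    qed
  qed
  finally have "z = 0\<^sub>v m" using pd zC' by force
  hence "z $ j = 0" using j by simp
  thus ?thesis using j unfolding z_def by simp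
qed


lemma eqr_get:
  fixes B :: "real mat"
  assumes B: "B \<in> carrier_mat m N" and e: "eq_restrictions m Phi B"
    and P: "Phi i \<in> carrier_mat N r" and i: "i < m" and l: "l < r"
  shows "row B i \<bullet> col (Phi i) l = 0"
proof -
  have "transpose_mat (Phi i) *\<^sub>v row B i = 0\<^sub>v (dim_col (Phi i))"
    using e i unfolding eq_restrictions_def by auto
  hence "(transpose_mat (Phi i) *\<^sub>v row B i) $ l = 0" using P l by simp
  hence "col (Phi i) l \<bullet> row B i = 0" using P l by simp
  thus ?thesis using comm_scalar_prod[of "col (Phi i) l" N "row B i"] P B l i by simp
qed

lemma eqr_intro:
  fixes B :: "real mat"
  assumes B: "B \<in> carrier_mat m N" and P: "\<forall>i<m. Phi i \<in> carrier_mat N (R i)"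
    and z: "\<And>i l. i < m \<Longrightarrow> l < R i \<Longrightarrow> row B i \<bullet> col (Phi i) l = 0"
  shows "eq_restrictions m Phi B"
  unfolding eq_restrictions_def
proof (intro allI impI)
  fix i assume i: "i < m"
  have Pi: "Phi i \<in> carrier_mat N (R i)" using P i by auto
  show "transpose_mat (Phi i) *\<^sub>v row B i = 0\<^sub>v (dim_col (Phi i))"
  proof (rule eq_vecI)
    fix l assume "l < dim_vec (0\<^sub>v (dim_col (Phi i)) :: real vec)"
    hence l: "l < R i" using Pi by simp
    have "(transpose_mat (Phi i) *\<^sub>v row B i) $ l = col (Phi i) l \<bullet> row B i" using Pi l by simp
    also have "\<dots> = row B i \<bullet> col (Phi i) l" using comm_scalar_prod[of "col (Phi i) l" N "row B i"] Pi B l i by simp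
    also have "\<dots> = 0" using z i l by simp
    finally show "(transpose_mat (Phi i) *\<^sub>v row B i) $ l = 0\<^sub>v (dim_col (Phi i)) $ l" using l Pi by simp
  qed (use Pi in simp)
qed

lemma rowFA:
  fixes F A P :: "real mat"
  assumes F: "F \<in> carrier_mat m m" and A: "A \<in> carrier_mat m N" and P: "P \<in> carrier_mat N r"
    and i: "i < m" and l: "l < r"
  shows "row (F * A) i \<bullet> col P l = (\<Sum>k\<in>{0..<m}. F $$ (i,k) * (row A k \<bullet> col P l))"
proof -
  have "row (F * A) i \<bullet> col P l = (F * A * P) $$ (i,l)"
    by (rule index_mult_mat(1)[symmetric]) (use F A P i l in auto)
  also have "F * A * P = F * (A * P)" using F A P by (simp add: assoc_mult_mat[of F m m A N P r])
  also have "(F * (A * P)) $$ (i,l) = (\<Sum>k\<in>{0..<m}. F $$ (i,k) * (A * P) $$ (k,l))"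
    by (rule mm_sum[OF F _ i l]) (use A P in simp)
  also have "\<dots> = (\<Sum>k\<in>{0..<m}. F $$ (i,k) * (row A k \<bullet> col P l))"
    by (rule sum.cong[OF refl]) (use A P l in simp)
  finally show ?thesis .
qed

lemma constructed_adm:
  fixes A Sig :: "real mat" and Phi :: "nat \<Rightarrow> real mat" and R :: "nat \<Rightarrow> nat" and wf :: "nat \<Rightarrow> real"
  assumes Gm: "G \<le> m" and A: "A \<in> carrier_mat m (Suc p * m)"
    and Sig: "Sig \<in> carrier_mat m m"
    and zA: "zero_A21 G m p A" and zS: "zero_cov_block G m Sig"
    and PhiC: "\<forall>i<m. Phi i \<in> carrier_mat (Suc p * m) (R i)"
    and eqr: "eq_restrictions m Phi A" and g: "g < G"
    and wf0: "\<And>k. G \<le> k \<or> k = g \<Longrightarrow> wf k = 0"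
    and wk: "\<And>l. l < R g \<Longrightarrow> (\<Sum>k\<in>{0..<m}. wf k * (row A k \<bullet> col (Phi g) l)) = 0"
  shows "admissible G m p A Sig Phi (mat m m (\<lambda>(i,k). (if i = k then 1 else 0) + (if i = g then wf k else 0)))"
proof -
  define F where "F = mat m m (\<lambda>(i,k). (if i = k then 1 else 0) + (if i = g then wf k else (0::real)))"
  define Fi where "Fi = mat m m (\<lambda>(i,k). (if i = k then 1 else 0) + (if i = g then - wf k else (0::real)))"
  have FC: "F \<in> carrier_mat m m" unfolding F_def by simp
  have FiC: "Fi \<in> carrier_mat m m" unfolding Fi_def by simp
  have gm: "g < m" using g Gm by simp
  have wg: "wf g = 0" using wf0 by simp
  have FFi: "F * Fi = 1\<^sub>m m"
  proof (rule eq_matI)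
    fix i j assume "i < dim_row (1\<^sub>m m :: real mat)" "j < dim_col (1\<^sub>m m :: real mat)"
    hence i: "i < m" and j: "j < m" by auto
    have "(F * Fi) $$ (i,j) = Fi $$ (i,j) + (if i = g then (\<Sum>k\<in>{0..<m}. wf k * Fi $$ (k,j)) else 0)"
      unfolding F_def by (rule Fmult_left[OF FiC i j])
    also have "(\<Sum>k\<in>{0..<m}. wf k * Fi $$ (k,j)) = (\<Sum>k\<in>{0..<m}. (if k = j then wf k else 0) + (if k = g then - (wf k * wf j) else 0))"
      by (rule sum.cong[OF refl]) (use j in \<open>auto simp: Fi_def algebra_simps\<close>)
    also have "\<dots> = wf j" using j gm wg by (simp add: sum.distrib)
    finally show "(F * Fi) $$ (i,j) = 1\<^sub>m m $$ (i,j)" using i j by (simp add: Fi_def)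
  qed (use FC FiC in auto)
  have FiF: "Fi * F = 1\<^sub>m m"
  proof (rule eq_matI)
    fix i j assume "i < dim_row (1\<^sub>m m :: real mat)" "j < dim_col (1\<^sub>m m :: real mat)"
    hence i: "i < m" and j: "j < m" by auto
    have "(Fi * F) $$ (i,j) = F $$ (i,j) + (if i = g then (\<Sum>k\<in>{0..<m}. - wf k * F $$ (k,j)) else 0)"
      unfolding Fi_def by (rule Fmult_left[OF FC i j])
    also have "(\<Sum>k\<in>{0..<m}. - wf k * F $$ (k,j)) = (\<Sum>k\<in>{0..<m}. (if k = j then - wf k else 0) + (if k = g then - (wf k * wf j) else 0))"
      by (rule sum.cong[OF refl]) (use j in \<open>auto simp: F_def algebra_simps\<close>)
    also have "\<dots> = - wf j" using j gm wg by (simp add: sum.distrib)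
    finally show "(Fi * F) $$ (i,j) = 1\<^sub>m m $$ (i,j)" using i j by (simp add: F_def)
  qed (use FC FiC in auto)
  have invF: "invertible_mat F"
    unfolding invertible_mat_def inverts_mat_def using FFi FiF FC FiC
    by (metis carrier_matD(1) carrier_matD(2) square_mat.simps)
  have zFA: "zero_A21 G m p (F * A)"
    unfolding zero_A21_def
  proof (intro allI impI)
    fix i j assume h: "G \<le> i \<and> i < m \<and> j < Suc p * m \<and> j mod m < G"
    have "(F * A) $$ (i,j) = A $$ (i,j) + (if i = g then (\<Sum>k\<in>{0..<m}. wf k * A $$ (k,j)) else 0)"
      unfolding F_def by (rule Fmult_left[OF A]) (use h in auto)
    also have "\<dots> = 0" using h g zA unfolding zero_A21_def by auto
    finally show "(F * A) $$ (i,j) = 0" .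
  qed
  have FS: "F * Sig \<in> carrier_mat m m" using FC Sig by simp
  have FSe: "(F * Sig) $$ (a,b) = Sig $$ (a,b) + (if a = g then (\<Sum>k\<in>{0..<m}. wf k * Sig $$ (k,b)) else 0)"
    if "a < m" "b < m" for a b
    unfolding F_def by (rule Fmult_left[OF Sig that])
  have FSFe: "(F * Sig * transpose_mat F) $$ (a,b) = (F * Sig) $$ (a,b) + (if b = g then (\<Sum>k\<in>{0..<m}. (F * Sig) $$ (a,k) * wf k) else 0)"
    if "a < m" "b < m" for a b
    using Fmult_right[OF FS that, of g wf] unfolding F_def .
  have S0: "Sig $$ (i,j) = 0 \<and> Sig $$ (j,i) = 0" if "i < G" "G \<le> j" "j < m" for i j
    using zS that unfolding zero_cov_block_def by auto
  have zC: "zero_cov_block G m (F * Sig * transpose_mat F)"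
    unfolding zero_cov_block_def
  proof (intro allI impI conjI)
    fix i j assume h: "i < G \<and> G \<le> j \<and> j < m"
    hence i: "i < m" "i < G" and j: "j < m" "G \<le> j" "j \<noteq> g" using Gm g by auto
    have s1: "(\<Sum>k\<in>{0..<m}. wf k * Sig $$ (k,j)) = 0"
    proof (rule sum.neutral, intro ballI)
      fix k assume "k \<in> {0..<m}"
      show "wf k * Sig $$ (k,j) = 0"
      proof (cases "k < G")
        case True thus ?thesis using S0[OF True j(2) j(1)] by simp
      next
        case False thus ?thesis using wf0[of k] by simp
      qed
    qed
    have s2: "(\<Sum>k\<in>{0..<m}. Sig $$ (j,k) * wf k) = 0"
    proof (rule sum.neutral, intro ballI)
      fix k assume "k \<in> {0..<m}"
      show "Sig $$ (j,k) * wf k = 0"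
      proof (cases "k < G")
        case True thus ?thesis using S0[OF True j(2) j(1)] by simp
      next
        case False thus ?thesis using wf0[of k] by simp
      qed
    qed
    show "(F * Sig * transpose_mat F) $$ (i,j) = 0"
      using FSFe[OF i(1) j(1)] FSe[OF i(1) j(1)] j(3) s1 S0[OF i(2) j(2) j(1)] by simp
    have s3: "(\<Sum>k\<in>{0..<m}. (F * Sig) $$ (j,k) * wf k) = (\<Sum>k\<in>{0..<m}. Sig $$ (j,k) * wf k)"
      by (rule sum.cong[OF refl]) (use FSe j in simp)
    show "(F * Sig * transpose_mat F) $$ (j,i) = 0"
      using FSFe[OF j(1) i(1)] FSe[OF j(1) i(1)] j(3) s2 s3 S0[OF i(2) j(2) j(1)] by simp
  qed
  have FAC: "F * A \<in> carrier_mat m (Suc p * m)" using FC A by simp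
  have eqFA: "eq_restrictions m Phi (F * A)"
  proof (rule eqr_intro[OF FAC PhiC])
    fix i l assume i: "i < m" and l: "l < R i"
    have Pi: "Phi i \<in> carrier_mat (Suc p * m) (R i)" using PhiC i by auto
    have AP: "A * Phi i \<in> carrier_mat m (R i)" using A Pi by simp
    have "row (F * A) i \<bullet> col (Phi i) l = (\<Sum>k\<in>{0..<m}. F $$ (i,k) * (row A k \<bullet> col (Phi i) l))"
      by (rule rowFA[OF FC A Pi i l])
    also have "\<dots> = (\<Sum>k\<in>{0..<m}. F $$ (i,k) * (A * Phi i) $$ (k,l))"
      by (rule sum.cong[OF refl]) (use A Pi l in simp)
    also have "\<dots> = (F * (A * Phi i)) $$ (i,l)" by (rule mm_sum[OF FC AP i l, symmetric])
    also have "\<dots> = (A * Phi i) $$ (i,l) + (if i = g then (\<Sum>k\<in>{0..<m}. wf k * (A * Phi i) $$ (k,l)) else 0)"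
      unfolding F_def by (rule Fmult_left[OF AP i l])
    also have "\<dots> = 0"
    proof -
      have "(A * Phi i) $$ (i,l) = row A i \<bullet> col (Phi i) l" using A Pi i l by simp
      also have "\<dots> = 0" by (rule eqr_get[OF A eqr Pi i l])
      finally have a0: "(A * Phi i) $$ (i,l) = 0" .
      have "i = g \<Longrightarrow> (\<Sum>k\<in>{0..<m}. wf k * (A * Phi i) $$ (k,l)) = 0"
      proof -
        assume ig: "i = g"
        have "(\<Sum>k\<in>{0..<m}. wf k * (A * Phi i) $$ (k,l)) = (\<Sum>k\<in>{0..<m}. wf k * (row A k \<bullet> col (Phi g) l))"
          by (rule sum.cong[OF refl]) (use A Pi l ig in simp)
        also have "\<dots> = 0" using wk l ig by simp
        finally show ?thesis .
      qed
      thus ?thesis using a0 by simp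
    qed
    finally show "row (F * A) i \<bullet> col (Phi i) l = 0" .
  qed
  show ?thesis
    unfolding admissible_def F_def[symmetric] using FC invF zFA zC eqFA by blast
qed


theorem corollary2p1:
  fixes G K m p g :: nat and A Sig :: "real mat"
    and Phi :: "nat \<Rightarrow> real mat" and R :: "nat \<Rightarrow> nat"
  assumes "G + K = m"
    and "A \<in> carrier_mat m (Suc p * m)"
    and "invertible_mat (mat m m (\<lambda>(i, j). A $$ (i, j)))"
    and "Sig \<in> carrier_mat m m" and "transpose_mat Sig = Sig"
    and "\<forall>x \<in> carrier_vec m. x \<noteq> 0\<^sub>v m \<longrightarrow> x \<bullet> (Sig *\<^sub>v x) > 0"
    and "zero_A21 G m p A"
    and "zero_cov_block G m Sig"
    and "\<forall>i<m. Phi i \<in> carrier_mat (Suc p * m) (R i)"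
    and "eq_restrictions m Phi A"
    and "g < G"
  shows "identified G m p A Sig Phi g \<longleftrightarrow>
    vec_space.rank G (mat G (Suc p * m) (\<lambda>(i, j). A $$ (i, j)) * Phi g) = G - 1"
proof -
  have Gm: "G \<le> m" using assms(1) by simp
  have gG: "g < G" using assms(11) .
  have gm: "g < m" using gG Gm by simp
  define N where "N = Suc p * m"
  have AC: "A \<in> carrier_mat m N" using assms(2) unfolding N_def .
  define A1 where "A1 = mat G N (\<lambda>(i, j). A $$ (i, j))"
  define M where "M = A1 * Phi g"
  have PhiC: "Phi g \<in> carrier_mat N (R g)" using assms(9) gm unfolding N_def by auto
  have A1C: "A1 \<in> carrier_mat G N" unfolding A1_def by simp
  have MC: "M \<in> carrier_mat G (R g)" unfolding M_def using A1C PhiC by simp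
  have rowA1: "row A1 k = row A k" if "k < G" for k
    by (rule eq_vecI) (use that Gm AC in \<open>auto simp: A1_def\<close>)
  have Mkl: "M $$ (k,l) = row A k \<bullet> col (Phi g) l" if "k < G" "l < R g" for k l
    unfolding M_def using that A1C PhiC rowA1[OF that(1)] by simp
  have Mg: "\<forall>l<R g. M $$ (g,l) = 0"
    using Mkl gG eqr_get[OF AC assms(10) PhiC gm] by simp
  have star: "vec_space.rank G M = G - 1 \<longleftrightarrow>
    (\<forall>x\<in>carrier_vec G. transpose_mat M *\<^sub>v x = 0\<^sub>v (R g) \<longrightarrow> (\<forall>j<G. j \<noteq> g \<longrightarrow> x $ j = 0))"
    by (rule vec_space.star[OF MC gG Mg])
  have goalM: "mat G (Suc p * m) (\<lambda>(i, j). A $$ (i, j)) * Phi g = M"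
    unfolding M_def A1_def N_def ..
  show ?thesis
    unfolding goalM star
  proof
    assume idf: "identified G m p A Sig Phi g"
    show "\<forall>x\<in>carrier_vec G. transpose_mat M *\<^sub>v x = 0\<^sub>v (R g) \<longrightarrow> (\<forall>j<G. j \<noteq> g \<longrightarrow> x $ j = 0)"
    proof (intro ballI impI allI)
      fix x j assume x: "x \<in> carrier_vec G" and kx: "transpose_mat M *\<^sub>v x = 0\<^sub>v (R g)"
        and j: "j < G" "j \<noteq> g"
      define wf where "wf = (\<lambda>k. if k < G \<and> k \<noteq> g then x $ k else (0::real))"
      have wf0: "wf k = 0" if "G \<le> k \<or> k = g" for k using that unfolding wf_def by auto
      have wk: "(\<Sum>k\<in>{0..<m}. wf k * (row A k \<bullet> col (Phi g) l)) = 0" if l: "l < R g" for l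
      proof -
        have "(\<Sum>k\<in>{0..<m}. wf k * (row A k \<bullet> col (Phi g) l)) = (\<Sum>k\<in>{0..<G}. wf k * (row A k \<bullet> col (Phi g) l))"
          by (rule sum.mono_neutral_right) (use Gm wf0 in auto)
        also have "\<dots> = (\<Sum>k\<in>{0..<G}. M $$ (k,l) * x $ k)"
        proof (rule sum.cong[OF refl])
          fix k assume "k \<in> {0..<G}"
          hence k: "k < G" by simp
          show "wf k * (row A k \<bullet> col (Phi g) l) = M $$ (k,l) * x $ k"
          proof (cases "k = g")
            case True thus ?thesis using Mg l wf0[of k] by simp
          next
            case False thus ?thesis using Mkl[OF k l] k unfolding wf_def by simp
          qed
        qed
        also have "\<dots> = (transpose_mat M *\<^sub>v x) $ l" by (rule tmv_sum[OF MC x l, symmetric])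
        also have "\<dots> = 0" using kx l by simp
        finally show ?thesis .
      qed
      have adm: "admissible G m p A Sig Phi (mat m m (\<lambda>(i,k). (if i = k then 1 else 0) + (if i = g then wf k else 0)))"
        by (rule constructed_adm[OF Gm assms(2) assms(4) assms(7) assms(8) assms(9) assms(10) gG wf0 wk])
      have "(mat m m (\<lambda>(i,k). (if i = k then 1 else 0) + (if i = g then wf k else (0::real)))) $$ (g,j) = 0"
        using idf adm j Gm unfolding identified_def by auto
      hence "wf j = 0" using j gm Gm by simp
      thus "x $ j = 0" using j unfolding wf_def by simp
    qed
  next
    assume K: "\<forall>x\<in>carrier_vec G. transpose_mat M *\<^sub>v x = 0\<^sub>v (R g) \<longrightarrow> (\<forall>j<G. j \<noteq> g \<longrightarrow> x $ j = 0)"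
    show "identified G m p A Sig Phi g"
      unfolding identified_def
    proof (intro allI impI)
      fix F assume adm: "admissible G m p A Sig Phi F"
      have FC: "F \<in> carrier_mat m m" and invF: "invertible_mat F" and zFA: "zero_A21 G m p (F * A)"
        and zC: "zero_cov_block G m (F * Sig * transpose_mat F)" and eqFA: "eq_restrictions m Phi (F * A)"
        using adm unfolding admissible_def by auto
      have F21: "F $$ (i,k) = 0" if "G \<le> i" "i < m" "k < G" for i k
        by (rule S1[OF assms(2) assms(3) assms(7) FC zFA Gm that])
      have F12: "F $$ (g,j) = 0" if "G \<le> j" "j < m" for j
        by (rule S2[OF FC invF F21 assms(4) assms(6) assms(8) zC gG Gm that])
      define x where "x = vec G (\<lambda>k. F $$ (g,k))"
      have xC: "x \<in> carrier_vec G" unfolding x_def by simp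
      have FAC: "F * A \<in> carrier_mat m N" using FC AC by simp
      have "transpose_mat M *\<^sub>v x = 0\<^sub>v (R g)"
      proof (rule eq_vecI)
        fix l assume "l < dim_vec (0\<^sub>v (R g) :: real vec)"
        hence l: "l < R g" by simp
        have "(transpose_mat M *\<^sub>v x) $ l = (\<Sum>k\<in>{0..<G}. M $$ (k,l) * x $ k)" by (rule tmv_sum[OF MC xC l])
        also have "\<dots> = (\<Sum>k\<in>{0..<G}. F $$ (g,k) * (row A k \<bullet> col (Phi g) l))"
          by (rule sum.cong[OF refl]) (use Mkl l in \<open>auto simp: x_def\<close>)
        also have "\<dots> = (\<Sum>k\<in>{0..<m}. F $$ (g,k) * (row A k \<bullet> col (Phi g) l))"
          by (rule sum.mono_neutral_left) (use Gm F12 in auto)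
        also have "\<dots> = row (F * A) g \<bullet> col (Phi g) l" by (rule rowFA[OF FC AC PhiC gm l, symmetric])
        also have "\<dots> = 0" by (rule eqr_get[OF FAC eqFA PhiC gm l])
        finally show "(transpose_mat M *\<^sub>v x) $ l = 0\<^sub>v (R g) $ l" using l by simp
      qed (use MC in simp)
      hence xz: "\<forall>j<G. j \<noteq> g \<longrightarrow> x $ j = 0" using K xC by blast
      have off: "\<forall>j<m. j \<noteq> g \<longrightarrow> F $$ (g,j) = 0"
      proof (intro allI impI)
        fix j assume j: "j < m" "j \<noteq> g"
        show "F $$ (g,j) = 0"
        proof (cases "j < G")
          case True thus ?thesis using xz j unfolding x_def by simp
        next
          case False thus ?thesis using F12 j by simp
        qed
      qed
      have diag: "F $$ (g,g) \<noteq> 0"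
      proof
        assume gg: "F $$ (g,g) = 0"
        obtain B where FB: "F * B = 1\<^sub>m m" and BF: "B * F = 1\<^sub>m (dim_row B)"
          using invF FC unfolding invertible_mat_def inverts_mat_def by auto
        have rB: "dim_row B = m" using arg_cong[OF BF, of dim_col] FC by simp
        have cB: "dim_col B = m" using arg_cong[OF FB, of dim_col] by simp
        have BC: "B \<in> carrier_mat m m" using rB cB by auto
        have "(F * B) $$ (g,g) = (\<Sum>k\<in>{0..<m}. F $$ (g,k) * B $$ (k,g))" by (rule mm_sum[OF FC BC gm gm])
        also have "\<dots> = 0" by (rule sum.neutral) (use off gg in auto)
        finally show False using FB gm by simp
      qed
      show "(\<forall>j<m. j \<noteq> g \<longrightarrow> F $$ (g, j) = 0) \<and> F $$ (g, g) \<noteq> 0" using off diag by blast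
    qed
  qed
qed

end
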